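(* Let $\Delta>0$, $L>0$ and $\epsilon\in[0,L)$ (in the paper's normalization $L=1$, this is $\epsilon\in[0,1)$). Let $\mathcal{A}$ be any (deterministic or randomized) algorithm which, at each iteration $t$, chooses a query point $x_t$ as a (possibly random) function of the previously queried points and the oracle answers received so far, and receives as answer the function value $f(x_t)$ and an element of the generalized gradient $\partial f(x_t)$. Then for every finite $T$ there exists $f\in\mathcal{F}(\Delta,L)$ such that, when $\mathcal{A}$ is run on $f$, the probability that the sequence $\{x_t\}_{t=1}^T$ contains an $\epsilon$-stationary point of $f$ is at most $\tfrac12$.
   Context: Clarke generalized gradient: $f^\circ(x;d):=\limsup_{y\to x,\,t\downarrow0}\frac{f(y+td)-f(y)}{t}$ and $\partial f(x):=\{g:\langle g,d\rangle\le f^\circ(x;d)\ \forall d\}$. A point $x$ is $\epsilon$-stationary if $\min\{\|g\|:g\in\partial f(x)\}\le\epsilon$. $f$ is directionally differentiable (Hadamard) if for all $x,d$ and all $\varphi:\mathbb{R}_+\to\mathbb{R}^n$ with $\varphi(0)=x$, $\lim_{t\to0^+}(\varphi(t)-\varphi(0))/t=d$, the limit $f'(x;d)=\lim_{t\to0^+}(f(\varphi(t))-f(x))/t$ exists. Given a fixed initial point $x_0$, $\mathcal{F}(\Delta,L)$ is the set of $f:\mathbb{R}^n\to\mathbb{R}$ that are $L$-Lipschitz, directionally differentiable at every point, and satisfy $f(x_0)-\inf_x f(x)\le\Delta$. *)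

theory Defs
  imports "HOL-Probability.Probability"
begin

definition clarke_dd :: "('a::euclidean_space \<Rightarrow> real) \<Rightarrow> 'a \<Rightarrow> 'a \<Rightarrow> ereal" where
  "clarke_dd f x d =
     Limsup (at (x, 0) within (UNIV \<times> {0<..}))
            (\<lambda>(y, t). ereal ((f (y + t *\<^sub>R d) - f y) / t))"

definition clarke_subdiff :: "('a::euclidean_space \<Rightarrow> real) \<Rightarrow> 'a \<Rightarrow> 'a set" where
  "clarke_subdiff f x = {g. \<forall>d. ereal (g \<bullet> d) \<le> clarke_dd f x d}"

definition eps_stationary :: "('a::euclidean_space \<Rightarrow> real) \<Rightarrow> real \<Rightarrow> 'a \<Rightarrow> bool" where
  "eps_stationary f eps x \<longleftrightarrow> (\<exists>g \<in> clarke_subdiff f x. norm g \<le> eps)"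

definition hadamard_dir_diff :: "('a::euclidean_space \<Rightarrow> real) \<Rightarrow> bool" where
  "hadamard_dir_diff f \<longleftrightarrow>
     (\<forall>x d (\<phi>::real \<Rightarrow> 'a). \<phi> 0 = x \<longrightarrow>
        ((\<lambda>t. (1 / t) *\<^sub>R (\<phi> t - \<phi> 0)) \<longlongrightarrow> d) (at_right 0) \<longrightarrow>
        (\<exists>l. ((\<lambda>t. (f (\<phi> t) - f x) / t) \<longlongrightarrow> l) (at_right 0)))"

text \<open>The function class F(Delta, L) relative to initial point x0
  (f x0 - inf f \<le> Delta, written pointwise).\<close>
definition fclass :: "'a::euclidean_space \<Rightarrow> real \<Rightarrow> real \<Rightarrow> ('a \<Rightarrow> real) set" where
  "fclass x0 \<Delta> L = {f. L-lipschitz_on UNIV f \<and> hadamard_dir_diff f \<and>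
                        (\<forall>x. f x0 - f x \<le> \<Delta>)}"

text \<open>Running an algorithm: alg t h gives the query at iteration t (0-based) from the
  history h = [(x_s, f x_s, g x_s). s < t]; the oracle returns f x and g x.\<close>
fun history :: "(nat \<Rightarrow> ('a \<times> real \<times> 'a) list \<Rightarrow> 'a) \<Rightarrow> ('a \<Rightarrow> real) \<Rightarrow> ('a \<Rightarrow> 'a)
                 \<Rightarrow> nat \<Rightarrow> ('a \<times> real \<times> 'a) list" where
  "history alg f g 0 = []"
| "history alg f g (Suc t) =
     (let h = history alg f g t; x = alg t h in h @ [(x, f x, g x)])"

definition query :: "(nat \<Rightarrow> ('a \<times> real \<times> 'a) list \<Rightarrow> 'a) \<Rightarrow> ('a \<Rightarrow> real) \<Rightarrow> ('a \<Rightarrow> 'a)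
                 \<Rightarrow> nat \<Rightarrow> 'a" where
  "query alg f g t = alg t (history alg f g t)"

end

theory Submission
  imports Defs
begin


lemma clarke_dd_affine_le:
  fixes f :: "'a::euclidean_space \<Rightarrow> real"
  assumes S: "open S" "x \<in> S" and aff: "\<And>y. y \<in> S \<Longrightarrow> f y = a \<bullet> y + b"
  shows "clarke_dd f x d \<le> ereal (a \<bullet> d)"
proof -
  obtain e where e: "e > 0" "ball x e \<subseteq> S" using S open_contains_ball by blast
  define \<delta> where "\<delta> = e / (2 * (norm d + 1))"
  have nd: "2 * (norm d + 1) > 0" by (smt (verit) norm_ge_zero)
  have \<delta>: "\<delta> > 0" using e nd unfolding \<delta>_def by simp
  have deq: "\<delta> * (2 * (norm d + 1)) = e" using nd unfolding \<delta>_def by simp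
  have "\<delta> * norm d \<ge> 0" using \<delta> by simp
  moreover have "\<delta> * 2 + (\<delta> * norm d) * 2 = e" using deq by (simp add: algebra_simps)
  ultimately have \<delta>e: "\<delta> \<le> e/2" and \<delta>d: "\<delta> * norm d < e/2" using \<delta> by linarith+
  have ev: "\<forall>\<^sub>F z in at (x, 0) within (UNIV \<times> {0<..}).
        (case z of (y, t) \<Rightarrow> ereal ((f (y + t *\<^sub>R d) - f y) / t)) \<le> ereal (a \<bullet> d)"
    unfolding eventually_at
  proof (intro exI[of _ \<delta>] conjI \<delta> ballI impI)
    fix z :: "'a \<times> real" assume z: "z \<in> UNIV \<times> {0<..}" "z \<noteq> (x, 0) \<and> dist z (x, 0) < \<delta>"
    obtain y t where yt: "z = (y, t)" by (cases z)
    have t: "t > 0" using z yt by auto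
    have dy: "dist y x < \<delta>" using z yt dist_fst_le[of z "(x,0)"] by auto
    have dt: "\<bar>t\<bar> < \<delta>" using z yt dist_snd_le[of z "(x,0)"] by (auto simp: dist_real_def)
    have "y \<in> S" using e dy \<delta>e by (auto simp: dist_commute)
    moreover have "dist (y + t *\<^sub>R d) x < e"
    proof -
      have "dist (y + t *\<^sub>R d) x \<le> dist y x + norm (t *\<^sub>R d)"
      proof -
        have "y + t *\<^sub>R d - x = (y - x) + t *\<^sub>R d" by (simp add: algebra_simps)
        then show ?thesis unfolding dist_norm by (metis norm_triangle_ineq)
      qed
      also have "norm (t *\<^sub>R d) = \<bar>t\<bar> * norm d" by simp
      also have "\<bar>t\<bar> * norm d \<le> \<delta> * norm d" using dt by (intro mult_right_mono) auto
      finally show ?thesis using dy \<delta>e \<delta>d by linarith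
    qed
    then have "y + t *\<^sub>R d \<in> S" using e by (auto simp: dist_commute)
    ultimately have "(f (y + t *\<^sub>R d) - f y) / t = a \<bullet> d"
      using aff t by (simp add: inner_add_right)
    then show "(case z of (y, t) \<Rightarrow> ereal ((f (y + t *\<^sub>R d) - f y) / t)) \<le> ereal (a \<bullet> d)"
      using yt by simp
  qed
  show ?thesis unfolding clarke_dd_def by (rule Limsup_bounded[OF ev])
qed

lemma clarke_dd_affine_ge:
  fixes f :: "'a::euclidean_space \<Rightarrow> real"
  assumes S: "open S" "x \<in> closure S" and aff: "\<And>y. y \<in> S \<Longrightarrow> f y = a \<bullet> y + b"
  shows "ereal (a \<bullet> d) \<le> clarke_dd f x d"
  unfolding clarke_dd_def
proof (rule Limsup_greatest)
  fix P :: "'a \<times> real \<Rightarrow> bool" assume "eventually P (at (x, 0) within UNIV \<times> {0<..})"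
  then obtain \<delta> where \<delta>: "\<delta> > 0" and P: "\<And>z. z \<in> UNIV \<times> {0<..} \<Longrightarrow> z \<noteq> (x, 0) \<Longrightarrow> dist z (x, 0) < \<delta> \<Longrightarrow> P z"
    unfolding eventually_at by blast
  obtain y where y: "y \<in> S" "dist y x < \<delta>/2" using S(2) \<delta> unfolding closure_approachable
    by (meson half_gt_zero)
  obtain e where e: "e > 0" "ball y e \<subseteq> S" using S(1) y(1) open_contains_ball by blast
  define t where "t = min (\<delta>/2) (e / (2 * (norm d + 1)))"
  have nd: "2 * (norm d + 1) > 0" by (smt (verit) norm_ge_zero)
  have t: "t > 0" using e \<delta> nd unfolding t_def by simp
  have td: "t * norm d < e"
  proof -
    have "t * norm d \<le> (e / (2 * (norm d + 1))) * norm d" unfolding t_def by (intro mult_right_mono) auto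
    also have "\<dots> < e"
    proof -
      define s where "s = e / (2 * (norm d + 1))"
      have s0: "s > 0" using e nd unfolding s_def by simp
      have "s * (2 * (norm d + 1)) = e" using nd unfolding s_def by simp
      then have "s * 2 + (s * norm d) * 2 = e" by (simp add: algebra_simps)
      then show ?thesis using s0 e unfolding s_def[symmetric] by linarith
    qed
    finally show ?thesis .
  qed
  have "dist y (y + t *\<^sub>R d) = t * norm d" using t by (simp add: dist_norm)
  then have "y + t *\<^sub>R d \<in> ball y e" using td by simp
  then have "y + t *\<^sub>R d \<in> S" using e by blast
  have "dist (y, t) (x, 0) < \<delta>"
  proof -
    have "dist (y, t) (x, 0) = norm (y - x, t)" by (simp add: dist_norm)
    also have "\<dots> \<le> norm (y - x) + norm t" by (rule norm_Pair_le)
    also have "t \<le> \<delta>/2" unfolding t_def by (rule min.cobounded1)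
    then have "norm t \<le> \<delta>/2" using t by simp
    finally show ?thesis using y by (simp add: dist_norm)
  qed
  then have "P (y, t)" using t by (intro P) auto
  moreover have "(f (y + t *\<^sub>R d) - f y) / t = a \<bullet> d"
    using aff t \<open>y + t *\<^sub>R d \<in> S\<close> y(1) by (simp add: inner_add_right)
  ultimately show "ereal (a \<bullet> d) \<le> (SUP z\<in>Collect P. case z of (y, t) \<Rightarrow> ereal ((f (y + t *\<^sub>R d) - f y) / t))"
    by (intro SUP_upper2[of "(y,t)"]) (simp_all add: mem_Collect_eq)
qed

lemma clarke_subdiff_affine_mem:
  fixes f :: "'a::euclidean_space \<Rightarrow> real"
  assumes "open S" "x \<in> closure S" "\<And>y. y \<in> S \<Longrightarrow> f y = a \<bullet> y + b"
  shows "a \<in> clarke_subdiff f x"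
  using clarke_dd_affine_ge[OF assms] unfolding clarke_subdiff_def by auto

lemma clarke_subdiff_affine_eq:
  fixes f :: "'a::euclidean_space \<Rightarrow> real"
  assumes S: "open S" "x \<in> S" and aff: "\<And>y. y \<in> S \<Longrightarrow> f y = a \<bullet> y + b"
  shows "clarke_subdiff f x = {a}"
proof
  show "{a} \<subseteq> clarke_subdiff f x"
    using clarke_subdiff_affine_mem[OF S(1) _ aff] S(2) closure_subset by blast
  show "clarke_subdiff f x \<subseteq> {a}"
  proof
    fix g assume g: "g \<in> clarke_subdiff f x"
    have le: "g \<bullet> d \<le> a \<bullet> d" for d
    proof -
      have "ereal (g \<bullet> d) \<le> clarke_dd f x d" using g unfolding clarke_subdiff_def by blast
      also have "\<dots> \<le> ereal (a \<bullet> d)" by (rule clarke_dd_affine_le[OF S aff])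
      finally show ?thesis by simp
    qed
    have "(g - a) \<bullet> (g - a) \<le> 0"
      using le[of "g - a"] by (simp add: inner_diff_left)
    then have "g - a = 0" by (meson inner_gt_zero_iff not_le)
    then show "g \<in> {a}" by simp
  qed
qed




definition dirdiff :: "('a::real_normed_vector \<Rightarrow> real) \<Rightarrow> bool" where
  "dirdiff f \<longleftrightarrow> (\<forall>x d. \<exists>l. ((\<lambda>t. (f (x + t *\<^sub>R d) - f x) / t) \<longlongrightarrow> l) (at_right 0))"

lemma dirdiff_affine: "dirdiff (\<lambda>x::'a::real_inner. a \<bullet> x + b)"
  unfolding dirdiff_def
proof (intro allI exI)
  fix x d :: 'a
  have "\<forall>\<^sub>F t in at_right (0::real). a \<bullet> d = (a \<bullet> (x + t *\<^sub>R d) + b - (a \<bullet> x + b)) / t"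
    using eventually_at_right_less[of 0] by eventually_elim (simp add: inner_add_right)
  then show "((\<lambda>t. (a \<bullet> (x + t *\<^sub>R d) + b - (a \<bullet> x + b)) / t) \<longlongrightarrow> a \<bullet> d) (at_right 0)"
    by (rule Lim_transform_eventually[OF tendsto_const])
qed

lemma along_cont:
  fixes f :: "'a::real_normed_vector \<Rightarrow> real"
  assumes "continuous_on UNIV f"
  shows "((\<lambda>t. f (x + t *\<^sub>R d)) \<longlongrightarrow> f x) (at_right 0)"
proof -
  have "isCont f x" using assms by (simp add: continuous_on_eq_continuous_at)
  moreover have "((\<lambda>t::real. x + t *\<^sub>R d) \<longlongrightarrow> x + 0 *\<^sub>R d) (at_right 0)"
    by (intro tendsto_intros)
  ultimately show ?thesis using isCont_tendsto_compose by fastforce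
qed

lemma max_div_pos: "(max A B - c) / t = max ((A - c) / t) ((B - c) / t)" if "(t::real) > 0"
proof (cases "A \<le> B")
  case True
  then have "(A - c) / t \<le> (B - c) / t" using that by (intro divide_right_mono) auto
  then show ?thesis using True by (simp add: max_def)
next
  case False
  then have "(B - c) / t \<le> (A - c) / t" using that by (intro divide_right_mono) auto
  then show ?thesis using False by (auto simp: max_def)
qed

lemma dirdiff_max:
  fixes f g :: "'a::real_normed_vector \<Rightarrow> real"
  assumes cf: "continuous_on UNIV f" and cg: "continuous_on UNIV g"
    and df: "dirdiff f" and dg: "dirdiff g"
  shows "dirdiff (\<lambda>x. max (f x) (g x))"
  unfolding dirdiff_def
proof (intro allI)
  fix x d :: 'a
  obtain l1 where l1: "((\<lambda>t. (f (x + t *\<^sub>R d) - f x) / t) \<longlongrightarrow> l1) (at_right 0)"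
    using df unfolding dirdiff_def by blast
  obtain l2 where l2: "((\<lambda>t. (g (x + t *\<^sub>R d) - g x) / t) \<longlongrightarrow> l2) (at_right 0)"
    using dg unfolding dirdiff_def by blast
  have diff: "((\<lambda>t. f (x + t *\<^sub>R d) - g (x + t *\<^sub>R d)) \<longlongrightarrow> f x - g x) (at_right 0)"
    by (intro tendsto_diff along_cont cf cg)
  consider "f x > g x" | "f x < g x" | "f x = g x" by linarith
  then show "\<exists>l. ((\<lambda>t. (max (f (x + t *\<^sub>R d)) (g (x + t *\<^sub>R d)) - max (f x) (g x)) / t) \<longlongrightarrow> l) (at_right 0)"
  proof cases
    case 1
    have "\<forall>\<^sub>F t in at_right 0. 0 < f (x + t *\<^sub>R d) - g (x + t *\<^sub>R d)"
      using order_tendstoD(1)[OF diff, of 0] 1 by simp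
    then have "\<forall>\<^sub>F t in at_right 0. (f (x + t *\<^sub>R d) - f x) / t = (max (f (x + t *\<^sub>R d)) (g (x + t *\<^sub>R d)) - max (f x) (g x)) / t"
      by eventually_elim (use 1 in auto)
    then have "((\<lambda>t. (max (f (x + t *\<^sub>R d)) (g (x + t *\<^sub>R d)) - max (f x) (g x)) / t) \<longlongrightarrow> l1) (at_right 0)" by (rule Lim_transform_eventually[OF l1])
    then show ?thesis by blast
  next
    case 2
    have "\<forall>\<^sub>F t in at_right 0. f (x + t *\<^sub>R d) - g (x + t *\<^sub>R d) < 0"
      using order_tendstoD(2)[OF diff, of 0] 2 by simp
    then have "\<forall>\<^sub>F t in at_right 0. (g (x + t *\<^sub>R d) - g x) / t = (max (f (x + t *\<^sub>R d)) (g (x + t *\<^sub>R d)) - max (f x) (g x)) / t"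
      by eventually_elim (use 2 in auto)
    then have "((\<lambda>t. (max (f (x + t *\<^sub>R d)) (g (x + t *\<^sub>R d)) - max (f x) (g x)) / t) \<longlongrightarrow> l2) (at_right 0)" by (rule Lim_transform_eventually[OF l2])
    then show ?thesis by blast
  next
    case 3
    have "\<forall>\<^sub>F t in at_right (0::real). max ((f (x + t *\<^sub>R d) - f x) / t) ((g (x + t *\<^sub>R d) - g x) / t) = (max (f (x + t *\<^sub>R d)) (g (x + t *\<^sub>R d)) - max (f x) (g x)) / t"
      using eventually_at_right_less[of 0] by eventually_elim (use 3 max_div_pos in auto)
    then have "((\<lambda>t. (max (f (x + t *\<^sub>R d)) (g (x + t *\<^sub>R d)) - max (f x) (g x)) / t) \<longlongrightarrow> max l1 l2) (at_right 0)" by (rule Lim_transform_eventually[OF tendsto_max[OF l1 l2]])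
    then show ?thesis by blast
  qed
qed

lemma dirdiff_uminus:
  assumes "dirdiff f" shows "dirdiff (\<lambda>x. - f x)"
  unfolding dirdiff_def
proof (intro allI)
  fix x d
  obtain l where l: "((\<lambda>t. (f (x + t *\<^sub>R d) - f x) / t) \<longlongrightarrow> l) (at_right 0)"
    using assms unfolding dirdiff_def by blast
  have "((\<lambda>t. - ((f (x + t *\<^sub>R d) - f x) / t)) \<longlongrightarrow> - l) (at_right 0)"
    by (rule tendsto_minus[OF l])
  moreover have "(\<lambda>t. - ((f (x + t *\<^sub>R d) - f x) / t)) = (\<lambda>t. (- f (x + t *\<^sub>R d) - - f x) / t)"
    by (simp add: minus_divide_left)
  ultimately show "\<exists>l. ((\<lambda>t. (- f (x + t *\<^sub>R d) - - f x) / t) \<longlongrightarrow> l) (at_right 0)" by auto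
qed

lemma dirdiff_min:
  fixes f g :: "'a::real_normed_vector \<Rightarrow> real"
  assumes cf: "continuous_on UNIV f" and cg: "continuous_on UNIV g"
    and df: "dirdiff f" and dg: "dirdiff g"
  shows "dirdiff (\<lambda>x. min (f x) (g x))"
proof -
  have "dirdiff (\<lambda>x. - max (- f x) (- g x))"
    by (intro dirdiff_uminus dirdiff_max continuous_on_minus cf cg) (use df dg dirdiff_uminus in auto)
  moreover have "(\<lambda>x. - max (- f x) (- g x)) = (\<lambda>x. min (f x) (g x))"
    by (auto simp: max_def min_def)
  ultimately show ?thesis by simp
qed

lemma lip_dirdiff_hadamard:
  fixes f :: "'a::euclidean_space \<Rightarrow> real"
  assumes lip: "L-lipschitz_on UNIV f" and dd: "dirdiff f"
  shows "hadamard_dir_diff f"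
  unfolding hadamard_dir_diff_def
proof (intro allI impI)
  fix x d :: 'a and \<phi> :: "real \<Rightarrow> 'a"
  assume \<phi>0: "\<phi> 0 = x" and lim: "((\<lambda>t. (1 / t) *\<^sub>R (\<phi> t - \<phi> 0)) \<longlongrightarrow> d) (at_right 0)"
  obtain l where l: "((\<lambda>t. (f (x + t *\<^sub>R d) - f x) / t) \<longlongrightarrow> l) (at_right 0)"
    using dd unfolding dirdiff_def by blast
  have L0: "L \<ge> 0" using lip lipschitz_on_nonneg by blast
  have lim2: "((\<lambda>t. L * norm ((1 / t) *\<^sub>R (\<phi> t - \<phi> 0) - d)) \<longlongrightarrow> L * norm (d - d)) (at_right 0)"
    by (intro tendsto_intros lim)
  have bound: "\<forall>\<^sub>F t in at_right (0::real). norm ((f (\<phi> t) - f (x + t *\<^sub>R d)) / t) \<le> L * norm ((1 / t) *\<^sub>R (\<phi> t - \<phi> 0) - d)"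
    using eventually_at_right_less[of 0]
  proof eventually_elim
    case (elim t)
    have "\<bar>f (\<phi> t) - f (x + t *\<^sub>R d)\<bar> \<le> L * norm (\<phi> t - (x + t *\<^sub>R d))"
      using lipschitz_onD[OF lip, of "\<phi> t" "x + t *\<^sub>R d"] by (simp add: dist_norm dist_real_def)
    also have "\<phi> t - (x + t *\<^sub>R d) = t *\<^sub>R ((1 / t) *\<^sub>R (\<phi> t - \<phi> 0) - d)"
      using elim \<phi>0 by (simp add: algebra_simps)
    also have "L * norm (t *\<^sub>R ((1 / t) *\<^sub>R (\<phi> t - \<phi> 0) - d)) = t * (L * norm ((1 / t) *\<^sub>R (\<phi> t - \<phi> 0) - d))"
      using elim by simp
    finally show ?case using elim by (simp add: divide_le_eq mult.commute)
  qed
  have "((\<lambda>t. (f (\<phi> t) - f (x + t *\<^sub>R d)) / t) \<longlongrightarrow> 0) (at_right 0)"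
    by (rule Lim_null_comparison[OF bound]) (use lim2 in simp)
  from tendsto_add[OF l this]
  have "((\<lambda>t. (f (x + t *\<^sub>R d) - f x) / t + (f (\<phi> t) - f (x + t *\<^sub>R d)) / t) \<longlongrightarrow> l) (at_right 0)"
    by simp
  moreover have "(\<lambda>t. (f (x + t *\<^sub>R d) - f x) / t + (f (\<phi> t) - f (x + t *\<^sub>R d)) / t) = (\<lambda>t. (f (\<phi> t) - f x) / t)"
    by (auto simp: diff_divide_distrib)
  ultimately show "\<exists>l. ((\<lambda>t. (f (\<phi> t) - f x) / t) \<longlongrightarrow> l) (at_right 0)" by auto
qed




definition phi :: "real \<Rightarrow> real \<Rightarrow> real \<Rightarrow> real \<Rightarrow> real" where
  "phi L m r s = max (L * s) (min (- m * s) (m * r - L * (s + r)))"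

definition hf :: "'a::euclidean_space \<Rightarrow> real \<Rightarrow> real \<Rightarrow> real \<Rightarrow> real \<Rightarrow> 'a \<Rightarrow> real" where
  "hf e p L m r x = phi L m r (e \<bullet> x - p)"

lemma hf_affine_form:
  "hf e p L m r = (\<lambda>x. max ((L *\<^sub>R e) \<bullet> x + (- L * p))
      (min (((- m) *\<^sub>R e) \<bullet> x + m * p) (((- L) *\<^sub>R e) \<bullet> x + (m * r - L * r + L * p))))"
  by (rule ext) (simp add: hf_def phi_def algebra_simps)

lemma hf_dirdiff: "dirdiff (hf e p L m r)"
  unfolding hf_affine_form
  by (intro dirdiff_max dirdiff_min dirdiff_affine continuous_intros)

lemma abs_max_le: "\<bar>a - c\<bar> \<le> k \<Longrightarrow> \<bar>b - d\<bar> \<le> k \<Longrightarrow> \<bar>max a b - max c d\<bar> \<le> (k::real)"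
  by (simp add: max_def abs_le_iff) 
lemma abs_min_le: "\<bar>a - c\<bar> \<le> k \<Longrightarrow> \<bar>b - d\<bar> \<le> k \<Longrightarrow> \<bar>min a b - min c d\<bar> \<le> (k::real)"
  by (simp add: min_def abs_le_iff) 

lemma phi_lip:
  assumes "0 \<le> m" "m \<le> L"
  shows "\<bar>phi L m r s - phi L m r s'\<bar> \<le> L * \<bar>s - s'\<bar>"
proof -
  have L0: "L \<ge> 0" using assms by simp
  have 1: "\<bar>L * s - L * s'\<bar> \<le> L * \<bar>s - s'\<bar>"
    using L0 by (simp add: abs_mult right_diff_distrib[symmetric])
  have "\<bar>- m * s - - m * s'\<bar> = m * \<bar>s - s'\<bar>"
    using assms by (simp add: abs_mult right_diff_distrib[symmetric] abs_minus_commute)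
  also have "\<dots> \<le> L * \<bar>s - s'\<bar>" using assms by (intro mult_right_mono) auto
  finally have 2: "\<bar>- m * s - - m * s'\<bar> \<le> L * \<bar>s - s'\<bar>" .
  have 3: "\<bar>(m * r - L * (s + r)) - (m * r - L * (s' + r))\<bar> \<le> L * \<bar>s - s'\<bar>"
  proof -
    have "(m * r - L * (s + r)) - (m * r - L * (s' + r)) = - (L * s - L * s')" by (simp add: algebra_simps)
    then show ?thesis using 1 by simp
  qed
  show ?thesis unfolding phi_def by (intro abs_max_le abs_min_le 1 2 3)
qed

lemma hf_lip:
  fixes e :: "'a::euclidean_space"
  assumes ee: "e \<bullet> e = 1" and "0 \<le> m" "m \<le> L"
  shows "L-lipschitz_on UNIV (hf e p L m r)"
proof (rule lipschitz_onI)
  show "0 \<le> L" using assms by simp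
  fix x y :: 'a
  have ne: "norm e = 1" using ee by (simp add: norm_eq_sqrt_inner)
  have "dist (hf e p L m r x) (hf e p L m r y) \<le> L * \<bar>(e \<bullet> x - p) - (e \<bullet> y - p)\<bar>"
    unfolding hf_def dist_real_def by (rule phi_lip[OF assms(2,3)])
  also have "\<bar>(e \<bullet> x - p) - (e \<bullet> y - p)\<bar> = \<bar>e \<bullet> (x - y)\<bar>" by (simp add: inner_diff_right)
  also have "\<dots> \<le> norm e * norm (x - y)" by (rule Cauchy_Schwarz_ineq2)
  finally show "dist (hf e p L m r x) (hf e p L m r y) \<le> L * dist x y"
    using assms ne by (simp add: dist_norm mult_left_mono order_trans)
qed




locale setup_hf =
  fixes e :: "'a::euclidean_space" and p L m r :: real
  assumes ee: "e \<bullet> e = 1" and m0: "0 < m" and mL: "m < L" and r0: "0 < r"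
begin

definition "c1 = p + (m - L) * r / (2 * L)"

lemma L0: "L > 0" using m0 mL by simp
lemma e0: "e \<noteq> 0" using ee by auto

lemma c1_lt: "c1 < p"
proof -
  have "(m - L) * r < 0" using mL r0 by (simp add: mult_neg_pos)
  then have "(m - L) * r / (2 * L) < 0" using L0 by (simp add: divide_neg_pos)
  then show ?thesis unfolding c1_def by simp
qed

lemma c1_gt: "p - r < c1"
proof -
  have "m * r > 0" "L * r > 0" using m0 r0 L0 by simp_all
  then have "- r * (2 * L) < (m - L) * r" by (simp add: algebra_simps)
  then have "- r < (m - L) * r / (2 * L)" using L0 by (simp add: less_divide_eq)
  then show ?thesis unfolding c1_def by simp
qed

lemma R1: assumes "c1 < e \<bullet> y" shows "hf e p L m r y = (L *\<^sub>R e) \<bullet> y + (- L * p)"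
proof -
  define s where "s = e \<bullet> y - p"
  have "(m - L) * r / (2 * L) < s" using assms unfolding c1_def s_def by simp
  then have "(m - L) * r < s * (2 * L)" using L0 by (simp add: divide_less_eq)
  then have h: "m * r - L * (s + r) < L * s" by (simp add: algebra_simps)
  have "phi L m r s = L * s" unfolding phi_def using h by (simp add: max_def min_def)
  then show ?thesis unfolding hf_def s_def by (simp add: algebra_simps)
qed

lemma R2: assumes "p - r < e \<bullet> y" "e \<bullet> y < c1"
  shows "hf e p L m r y = ((- L) *\<^sub>R e) \<bullet> y + (m * r - L * r + L * p)"
proof -
  define s where "s = e \<bullet> y - p"
  have "s < (m - L) * r / (2 * L)" using assms unfolding c1_def s_def by simp
  then have "s * (2 * L) < (m - L) * r" using L0 by (simp add: less_divide_eq)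
  then have h: "L * s < m * r - L * (s + r)" by (simp add: algebra_simps)
  have "0 < (L - m) * (s + r)" using mL assms(1) unfolding s_def by (intro mult_pos_pos) auto
  then have h2: "m * r - L * (s + r) < - m * s" by (simp add: algebra_simps)
  have "phi L m r s = m * r - L * (s + r)" unfolding phi_def using h h2 by (simp add: max_def min_def)
  then show ?thesis unfolding hf_def s_def by (simp add: algebra_simps)
qed

lemma R3: assumes "e \<bullet> y < p - r"
  shows "hf e p L m r y = ((- m) *\<^sub>R e) \<bullet> y + m * p"
proof -
  define s where "s = e \<bullet> y - p"
  have sr: "s + r < 0" using assms unfolding s_def by simp
  have "0 < (L - m) * (- (s + r))" using mL sr by (intro mult_pos_pos) auto
  then have h: "- m * s < m * r - L * (s + r)" by (simp add: algebra_simps)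
  have "0 < (L + m) * (- s)" using mL m0 sr r0 by (intro mult_pos_pos) auto
  then have h2: "L * s < - m * s" by (simp add: algebra_simps)
  have "phi L m r s = - m * s" unfolding phi_def using h h2 by (simp add: max_def min_def)
  then show ?thesis unfolding hf_def s_def by (simp add: algebra_simps)
qed

lemma subdiff_pos: assumes "e \<bullet> x - p \<ge> 0" shows "clarke_subdiff (hf e p L m r) x = {L *\<^sub>R e}"
proof -
  have "x \<in> {y. c1 < e \<bullet> y}" using assms c1_lt by simp
  show ?thesis by (rule clarke_subdiff_affine_eq[OF open_halfspace_gt \<open>x \<in> _\<close>]) (rule R1, simp)
qed

lemma subdiff_neg: assumes "e \<bullet> x - p < - r" shows "clarke_subdiff (hf e p L m r) x = {(- m) *\<^sub>R e}"
proof -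
  have "x \<in> {y. e \<bullet> y < p - r}" using assms by simp
  show ?thesis by (rule clarke_subdiff_affine_eq[OF open_halfspace_lt \<open>x \<in> _\<close>]) (rule R3, simp)
qed

lemma subdiff_nonempty: "clarke_subdiff (hf e p L m r) x \<noteq> {}"
proof (cases "c1 \<le> e \<bullet> x")
  case True
  have "x \<in> closure {y. c1 < e \<bullet> y}" using True closure_halfspace_gt[OF e0, of c1] by simp
  then have "L *\<^sub>R e \<in> clarke_subdiff (hf e p L m r) x"
    by (rule clarke_subdiff_affine_mem[OF open_halfspace_gt]) (rule R1, simp)
  then show ?thesis by (metis empty_iff)
next
  case False
  show ?thesis
  proof (cases "p - r < e \<bullet> x")
    case True
    let ?S = "{y. p - r < e \<bullet> y} \<inter> {y. e \<bullet> y < c1}"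
    have o: "open ?S" by (intro open_Int open_halfspace_gt open_halfspace_lt)
    have "x \<in> ?S" using True False by simp
    then have "x \<in> closure ?S" by (meson closure_subset subsetD)
    have "(- L) *\<^sub>R e \<in> clarke_subdiff (hf e p L m r) x"
      by (rule clarke_subdiff_affine_mem[OF o \<open>x \<in> closure ?S\<close>]) (rule R2, simp_all)
    then show ?thesis by (metis empty_iff)
  next
    case F2: False
    have "x \<in> closure {y. e \<bullet> y < p - r}" using F2 closure_halfspace_lt[OF e0, of "p - r"] by simp
    then have "(- m) *\<^sub>R e \<in> clarke_subdiff (hf e p L m r) x"
      by (rule clarke_subdiff_affine_mem[OF open_halfspace_lt]) (rule R3, simp)
    then show ?thesis by (metis empty_iff)
  qed
qed

lemma hf_x0: "hf e p L m r x = 0" if "e \<bullet> x = p"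
proof -
  have "m * r < L * r" using mL r0 by simp
  then show ?thesis using that unfolding hf_def phi_def by (simp add: max_def min_def)
qed

lemma hf_lower: "hf e p L m r x \<ge> - (r * (L - m)) / 2"
proof -
  define s where "s = e \<bullet> x - p"
  have "phi L m r s \<ge> - (r * (L - m)) / 2"
  proof (cases "L * s \<ge> - (r * (L - m)) / 2")
    case True then show ?thesis unfolding phi_def by simp
  next
    case False
    moreover have "r * (L - m) > 0" using mL r0 by simp
    ultimately have "L * s < 0" by linarith
    then have "s < 0" using L0 by (simp add: mult_less_0_iff)
    then have "- m * s \<ge> 0" using m0 by (simp add: mult_nonpos_nonneg mult_le_0_iff)
    moreover have "m * r - L * (s + r) > - (r * (L - m)) / 2"
    proof -
      have q1: "r * (L - m) = L * r - m * r" and q2: "L * (s + r) = L * s + L * r" by (simp_all add: algebra_simps)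
      have "L * s < - (L * r - m * r) / 2" using False unfolding q1 by simp
      then show ?thesis unfolding q1 q2 by (simp add: field_simps)
    qed
    ultimately show ?thesis unfolding phi_def using \<open>r * (L - m) > 0\<close> by (simp add: le_max_iff_disj)
  qed
  then show ?thesis unfolding hf_def s_def by simp
qed

end




lemma history_agree:
  assumes base: "\<forall>t<T. query alg F G t \<in> U" and agree: "\<forall>x\<in>U. f x = F x \<and> g x = G x"
  shows "t \<le> T \<Longrightarrow> history alg f g t = history alg F G t"
proof (induction t)
  case 0 then show ?case by simp
next
  case (Suc t)
  then have IH: "history alg f g t = history alg F G t" and tT: "t < T" by auto
  have "alg t (history alg F G t) \<in> U" using base tT unfolding query_def by blast
  then show ?case using IH agree by (simp add: Let_def)
qed

lemma query_agree:
  assumes "\<forall>t<T. query alg F G t \<in> U" "\<forall>x\<in>U. f x = F x \<and> g x = G x" "t < T"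
  shows "query alg f g t = query alg F G t"
  unfolding query_def using history_agree[OF assms(1,2), of t] assms(3) by simp

lemma exists_small:
  fixes E :: "nat \<Rightarrow> 'a set"
  assumes P: "prob_space M" and E: "\<And>n. E n \<in> sets M" and fin: "\<And>\<omega>. finite {n. \<omega> \<in> E n}"
  shows "\<exists>n. measure M (E n) \<le> 1/2"
proof (rule ccontr)
  assume "\<not> ?thesis"
  then have big: "\<And>n. measure M (E n) > 1/2" by (simp add: not_le)
  interpret prob_space M by (rule P)
  define B where "B k = (\<Union>n\<in>{k..}. E n)" for k
  have Bs: "range B \<subseteq> sets M" unfolding B_def using E by (intro subsetI) (auto intro!: sets.countable_UN)
  have dec: "decseq B" unfolding B_def decseq_def by (intro allI impI UN_mono) auto
  have empty: "(\<Inter>k. B k) = {}"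
  proof safe
    fix \<omega> assume w: "\<omega> \<in> (\<Inter>k. B k)"
    obtain N where N: "{n. \<omega> \<in> E n} \<subseteq> {..<N}"
      using finite_nat_bounded[OF fin[of \<omega>]] by blast
    have "\<omega> \<in> B N" using w by blast
    then obtain n where n: "n \<ge> N" "\<omega> \<in> E n" unfolding B_def by blast
    then have "n < N" using N by blast
    then show "\<omega> \<in> {}" using n by simp
  qed
  have "(\<lambda>k. measure M (B k)) \<longlonglongrightarrow> measure M (\<Inter>k. B k)"
    by (rule Lim_measure_decseq[OF Bs dec]) simp
  then have "(\<lambda>k. measure M (B k)) \<longlonglongrightarrow> 0" using empty by simp
  then have "eventually (\<lambda>k. measure M (B k) < 1/2) sequentially"
    by (rule order_tendstoD) simp
  then obtain k where k: "measure M (B k) < 1/2" by (auto simp: eventually_sequentially)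
  have "E k \<subseteq> B k" unfolding B_def by auto
  then have "measure M (E k) \<le> measure M (B k)"
    using Bs by (intro finite_measure_mono) auto
  then show False using k big[of k] by linarith
qed




lemma hf_in_fclass:
  fixes e x0 :: "'a::euclidean_space"
  assumes ee: "e \<bullet> e = 1" and m0: "0 < m" and mL: "m < L" and r0: "0 < r" and rL: "r * L \<le> \<Delta>"
  shows "hf e (e \<bullet> x0) L m r \<in> fclass x0 \<Delta> L"
proof -
  interpret setup_hf e "e \<bullet> x0" L m r using assms by unfold_locales auto
  have lip: "L-lipschitz_on UNIV (hf e (e \<bullet> x0) L m r)" using hf_lip[OF ee] m0 mL by simp
  have had: "hadamard_dir_diff (hf e (e \<bullet> x0) L m r)" by (rule lip_dirdiff_hadamard[OF lip hf_dirdiff])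
  have "\<forall>x. hf e (e \<bullet> x0) L m r x0 - hf e (e \<bullet> x0) L m r x \<le> \<Delta>"
  proof
    fix x
    have "hf e (e \<bullet> x0) L m r x0 = 0" by (rule hf_x0) simp
    moreover have "hf e (e \<bullet> x0) L m r x \<ge> - (r * (L - m)) / 2" by (rule hf_lower)
    moreover have "r * (L - m) \<le> r * L" using r0 m0 by (simp add: mult_left_mono)
    moreover have "r * L > 0" using r0 mL m0 by simp
    ultimately show "hf e (e \<bullet> x0) L m r x0 - hf e (e \<bullet> x0) L m r x \<le> \<Delta>"
      using rL \<open>r * L > 0\<close> by linarith
  qed
  then show ?thesis using lip had unfolding fclass_def by blast
qed

lemma finite_bad:
  assumes L0: "L > 0" and D0: "\<Delta> > 0" and sneg: "(s::real) < 0"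
  shows "finite {n::nat. - (\<Delta> / (L * (real n + 1))) \<le> s}"
proof -
  define X where "X = \<Delta> / (L * (- s))"
  have "{n::nat. - (\<Delta> / (L * (real n + 1))) \<le> s} \<subseteq> {..nat \<lceil>X\<rceil>}"
  proof
    fix n :: nat assume "n \<in> {n::nat. - (\<Delta> / (L * (real n + 1))) \<le> s}"
    then have h: "- s \<le> \<Delta> / (L * (real n + 1))" by simp
    have pos: "L * (real n + 1) > 0" using L0 by simp
    have "(- s) * (L * (real n + 1)) \<le> \<Delta>" using h pos by (simp add: le_divide_eq)
    then have i1: "(real n + 1) * (L * (- s)) \<le> \<Delta>" by (simp add: algebra_simps)
    have p2: "L * (- s) > 0" using L0 sneg by (intro mult_pos_pos) auto
    have "real n + 1 \<le> X" unfolding X_def by (rule iffD2[OF pos_le_divide_eq[OF p2] i1])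
    then have "real n \<le> real (nat \<lceil>X\<rceil>)" using real_nat_ceiling_ge[of X] by linarith
    then show "n \<in> {..nat \<lceil>X\<rceil>}" by simp
  qed
  then show ?thesis using finite_subset by blast
qed




theorem theorem1:
  fixes M :: "'s measure"
    and alg :: "'s \<Rightarrow> nat \<Rightarrow> ('a::euclidean_space \<times> real \<times> 'a) list \<Rightarrow> 'a"
    and x0 :: 'a and \<Delta> L \<epsilon> :: real and T :: nat
  assumes "\<Delta> > 0" and "L > 0" and "0 \<le> \<epsilon>" and "\<epsilon> < L"
    and "prob_space M"
    and meas: "\<And>f g. f \<in> fclass x0 \<Delta> L \<Longrightarrow> (\<forall>x. g x \<in> clarke_subdiff f x) \<Longrightarrow>
            {\<omega> \<in> space M. \<exists>t<T. eps_stationary f \<epsilon> (query (alg \<omega>) f g t)} \<in> sets M"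
  shows "\<exists>f \<in> fclass x0 \<Delta> L. \<exists>g. (\<forall>x. g x \<in> clarke_subdiff f x) \<and>
           measure M {\<omega> \<in> space M. \<exists>t<T. eps_stationary f \<epsilon> (query (alg \<omega>) f g t)} \<le> 1 / 2"
proof -
  note D0 = assms(1) and L0 = assms(2) and eps0 = assms(3) and epsL = assms(4) and prob = assms(5)
  obtain e where eB: "e \<in> (Basis :: 'a set)" using nonempty_Basis by blast
  have ee: "e \<bullet> e = 1" using eB by (simp add: inner_Basis)
  have ne: "norm e = 1" using ee by (simp add: norm_eq_sqrt_inner)
  define p where "p = e \<bullet> x0"
  define m where "m = (L + \<epsilon>) / 2"
  have m0: "0 < m" and mL: "m < L" and em: "\<epsilon> < m" using eps0 epsL unfolding m_def by auto
  define r where "r n = \<Delta> / (L * (real n + 1))" for n :: nat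
  have r0: "r n > 0" for n using D0 L0 unfolding r_def by simp
  have rL: "r n * L \<le> \<Delta>" for n
  proof -
    have "r n * L = \<Delta> / (real n + 1)" using L0 unfolding r_def by simp
    also have "\<dots> \<le> \<Delta>" using D0 by (simp add: divide_le_eq)
    finally show ?thesis .
  qed
  define F0 where "F0 x = (if e \<bullet> x - p \<ge> 0 then L * (e \<bullet> x - p) else - m * (e \<bullet> x - p))" for x
  define G0 where "G0 x = (if e \<bullet> x - p \<ge> 0 then L *\<^sub>R e else (- m) *\<^sub>R e)" for x
  define U where "U n = {x. e \<bullet> x - p \<ge> 0 \<or> e \<bullet> x - p < - r n}" for n
  define f where "f n = hf e p L m (r n)" for n
  define g where "g n x = (if x \<in> U n then G0 x else (SOME v. v \<in> clarke_subdiff (f n) x))" for n x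
  have key: "f n \<in> fclass x0 \<Delta> L \<and> (\<forall>x. g n x \<in> clarke_subdiff (f n) x) \<and>
      (\<forall>x\<in>U n. f n x = F0 x \<and> g n x = G0 x \<and> \<not> eps_stationary (f n) \<epsilon> x)" for n
  proof -
    interpret setup_hf e p L m "r n" using ee m0 mL r0 by unfold_locales auto
    have A: "f n \<in> fclass x0 \<Delta> L" unfolding f_def p_def by (rule hf_in_fclass[OF ee m0 mL r0 rL])
    have posx: "clarke_subdiff (f n) x = {L *\<^sub>R e}" if "e \<bullet> x - p \<ge> 0" for x
      unfolding f_def by (rule subdiff_pos[OF that])
    have negx: "clarke_subdiff (f n) x = {(- m) *\<^sub>R e}" if "e \<bullet> x - p < - r n" for x
      unfolding f_def by (rule subdiff_neg[OF that])
    have B: "g n x \<in> clarke_subdiff (f n) x" for x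
    proof (cases "x \<in> U n")
      case True
      show ?thesis
      proof (cases "e \<bullet> x - p \<ge> 0")
        case True2: True
        then show ?thesis using True posx[OF True2] unfolding g_def G0_def by simp
      next
        case False2: False
        then have "e \<bullet> x - p < - r n" using True unfolding U_def by simp
        then show ?thesis using True False2 negx[of x] unfolding g_def G0_def by simp
      qed
    next
      case False
      have "\<exists>v. v \<in> clarke_subdiff (f n) x" using subdiff_nonempty[of x] unfolding f_def by blast
      then have "(SOME v. v \<in> clarke_subdiff (f n) x) \<in> clarke_subdiff (f n) x" by (rule someI_ex)
      then show ?thesis using False unfolding g_def by simp
    qed
    have C: "f n x = F0 x \<and> g n x = G0 x \<and> \<not> eps_stationary (f n) \<epsilon> x" if xU: "x \<in> U n" for x
    proof (cases "e \<bullet> x - p \<ge> 0")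
      case True
      have "c1 < e \<bullet> x" using True c1_lt by simp
      from R1[OF this] have "f n x = F0 x" using True unfolding f_def F0_def by (simp add: algebra_simps)
      moreover have "g n x = G0 x" using xU unfolding g_def by simp
      moreover have "\<not> eps_stationary (f n) \<epsilon> x"
        unfolding eps_stationary_def posx[OF True] using ne L0 epsL by simp
      ultimately show ?thesis by blast
    next
      case False
      then have neg: "e \<bullet> x - p < - r n" using xU unfolding U_def by simp
      then have "e \<bullet> x < p - r n" by simp
      from R3[OF this] have "f n x = F0 x" using False unfolding f_def F0_def by (simp add: algebra_simps)
      moreover have "g n x = G0 x" using xU unfolding g_def by simp
      moreover have "\<not> eps_stationary (f n) \<epsilon> x"
        unfolding eps_stationary_def negx[OF neg] using ne m0 em by simp
      ultimately show ?thesis by blast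
    qed
    show ?thesis using A B C by blast
  qed
  define E where "E n = {\<omega> \<in> space M. \<exists>t<T. eps_stationary (f n) \<epsilon> (query (alg \<omega>) (f n) (g n) t)}" for n
  have Esets: "E n \<in> sets M" for n unfolding E_def using meas key by blast
  have fin: "finite {n. \<omega> \<in> E n}" for \<omega>
  proof -
    define X where "X t = query (alg \<omega>) F0 G0 t" for t
    have sub: "{n. \<omega> \<in> E n} \<subseteq> (\<Union>t\<in>{..<T}. {n. X t \<notin> U n})"
    proof
      fix n assume "n \<in> {n. \<omega> \<in> E n}"
      then obtain t where t: "t < T" "eps_stationary (f n) \<epsilon> (query (alg \<omega>) (f n) (g n) t)"
        unfolding E_def by blast
      show "n \<in> (\<Union>t\<in>{..<T}. {n. X t \<notin> U n})"
      proof (rule ccontr)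
        assume "\<not> ?thesis"
        then have all: "\<forall>t<T. query (alg \<omega>) F0 G0 t \<in> U n" unfolding X_def by auto
        have agree: "\<forall>x\<in>U n. f n x = F0 x \<and> g n x = G0 x" using key by blast
        have eq: "query (alg \<omega>) (f n) (g n) t = query (alg \<omega>) F0 G0 t"
          by (rule query_agree[OF all agree t(1)])
        have "query (alg \<omega>) F0 G0 t \<in> U n" using all t(1) by blast
        then have "\<not> eps_stationary (f n) \<epsilon> (query (alg \<omega>) F0 G0 t)" using key by blast
        then show False using t(2) eq by simp
      qed
    qed
    have "finite (\<Union>t\<in>{..<T}. {n. X t \<notin> U n})"
    proof (intro finite_UN_I finite_lessThan)
      fix t
      show "finite {n. X t \<notin> U n}"
      proof (cases "e \<bullet> X t - p < 0")
        case True
        have "{n. X t \<notin> U n} \<subseteq> {n. - (\<Delta> / (L * (real n + 1))) \<le> e \<bullet> X t - p}"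
          unfolding U_def r_def by auto
        then show ?thesis using finite_bad[OF L0 D0 True] finite_subset by blast
      next
        case False
        then have "{n. X t \<notin> U n} = {}" unfolding U_def by auto
        then show ?thesis by simp
      qed
    qed
    then show ?thesis using sub finite_subset by blast
  qed
  obtain n where n: "measure M (E n) \<le> 1/2" using exists_small[OF prob Esets fin] by blast
  show ?thesis using key[of n] n unfolding E_def by blast
qed


end
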